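(* Let $S$ be an inverse semigroup, regarded as an algebraic structure in the language $\mathcal{L}=\{\cdot,{}^{-1}\}\cup\{s\mid s\in S\}$. Suppose $S$ contains two idempotents $e,f$ that are incomparable with respect to the natural order on idempotents (i.e. $ef\neq e$ and $fe\neq f$). Then $S$ is not an equational domain in the language $\mathcal{L}$.
   Context: A semigroup $S$ is inverse if for every $s\in S$ there is a unique $s^{-1}\in S$ with $ss^{-1}s=s$ and $s^{-1}ss^{-1}=s^{-1}$; its idempotents commute. The natural order on idempotents is $e\le f \iff ef=e$. The language $\mathcal{L}$ consists of multiplication, inversion, and a constant symbol for every element of $S$. For variables $x_1,\dots,x_n$, a term of $\mathcal{L}$ is a finite product of variables raised to integer powers and constants from $S$. An equation is an equality of two terms; a system of equations is an arbitrary set of equations in $x_1,\dots,x_n$. A set $Y\subseteq S^n$ is algebraic over $S$ if it is the set of all tuples in $S^n$ satisfying all equations of some system. $S$ is an equational domain (in $\mathcal{L}$) if for every $n$, every finite union of algebraic subsets of $S^n$ is algebraic. *)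

theory Defs
  imports Main
begin

definition inverse_semigroup :: "('a \<Rightarrow> 'a \<Rightarrow> 'a) \<Rightarrow> bool" where
  "inverse_semigroup mul \<longleftrightarrow>
     (\<forall>x y z. mul (mul x y) z = mul x (mul y z)) \<and>
     (\<forall>s. \<exists>!t. mul (mul s t) s = s \<and> mul (mul t s) t = t)"

definition sg_inv :: "('a \<Rightarrow> 'a \<Rightarrow> 'a) \<Rightarrow> 'a \<Rightarrow> 'a" where
  "sg_inv mul s = (THE t. mul (mul s t) s = s \<and> mul (mul t s) t = t)"

datatype 'a trm = Var nat | Const 'a | Mul "'a trm" "'a trm" | Inv "'a trm"

fun trm_vars :: "'a trm \<Rightarrow> nat set" where
  "trm_vars (Var i) = {i}"
| "trm_vars (Const c) = {}"
| "trm_vars (Mul t u) = trm_vars t \<union> trm_vars u"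
| "trm_vars (Inv t) = trm_vars t"

text \<open>Evaluation at a point (x_1,...,x_n) given as a list; variable Var i denotes x_(i+1).\<close>
fun trm_eval :: "('a \<Rightarrow> 'a \<Rightarrow> 'a) \<Rightarrow> 'a list \<Rightarrow> 'a trm \<Rightarrow> 'a" where
  "trm_eval mul xs (Var i) = xs ! i"
| "trm_eval mul xs (Const c) = c"
| "trm_eval mul xs (Mul t u) = mul (trm_eval mul xs t) (trm_eval mul xs u)"
| "trm_eval mul xs (Inv t) = sg_inv mul (trm_eval mul xs t)"

definition algebraic :: "('a \<Rightarrow> 'a \<Rightarrow> 'a) \<Rightarrow> nat \<Rightarrow> 'a list set \<Rightarrow> bool" where
  "algebraic mul n Y \<longleftrightarrow>
     (\<exists>E :: ('a trm \<times> 'a trm) set.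
        (\<forall>(t, u) \<in> E. trm_vars t \<subseteq> {..<n} \<and> trm_vars u \<subseteq> {..<n}) \<and>
        Y = {xs. length xs = n \<and> (\<forall>(t, u) \<in> E. trm_eval mul xs t = trm_eval mul xs u)})"

definition equational_domain :: "('a \<Rightarrow> 'a \<Rightarrow> 'a) \<Rightarrow> bool" where
  "equational_domain mul \<longleftrightarrow>
     (\<forall>n (Ys :: 'a list set set). finite Ys \<and> Ys \<noteq> {} \<and> (\<forall>Y \<in> Ys. algebraic mul n Y)
        \<longrightarrow> algebraic mul n (\<Union>Ys))"

end

theory Submission
  imports Defs
begin

locale invsg =
  fixes mul :: "'a \<Rightarrow> 'a \<Rightarrow> 'a" (infixl "\<cdot>" 70)
  assumes isg: "inverse_semigroup mul"
begin

abbreviation iv where "iv \<equiv> sg_inv mul"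

lemma assoc[simp]: "(x \<cdot> y) \<cdot> z = x \<cdot> (y \<cdot> z)"
  using isg unfolding inverse_semigroup_def by blast

lemma ex1: "\<exists>!t. s \<cdot> t \<cdot> s = s \<and> t \<cdot> s \<cdot> t = t"
  using isg unfolding inverse_semigroup_def by blast

lemma inv_prop: "s \<cdot> iv s \<cdot> s = s \<and> iv s \<cdot> s \<cdot> iv s = iv s"
  unfolding sg_inv_def by (rule theI'[OF ex1])

lemma inv1: "s \<cdot> (iv s \<cdot> s) = s" using inv_prop by simp
lemma inv2: "iv s \<cdot> (s \<cdot> iv s) = iv s" using inv_prop by simp

lemma inv_uniq: "s \<cdot> (t \<cdot> s) = s \<Longrightarrow> t \<cdot> (s \<cdot> t) = t \<Longrightarrow> t = iv s"
  using ex1[of s] inv_prop[of s] by auto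

lemma inv_inv[simp]: "iv (iv s) = s"
  using inv_uniq[of "iv s" s] inv1 inv2 by simp

definition idem where "idem g \<longleftrightarrow> g \<cdot> g = g"

lemma idem_inv: "idem g \<Longrightarrow> iv g = g"
  unfolding idem_def using inv_uniq[of g g] by (metis assoc)

lemma inv1'[simp]: "s \<cdot> (iv s \<cdot> (s \<cdot> x)) = s \<cdot> x"
  by (metis assoc inv1)
lemma inv2'[simp]: "iv s \<cdot> (s \<cdot> (iv s \<cdot> x)) = iv s \<cdot> x"
  by (metis assoc inv2)
lemma inv1s[simp]: "s \<cdot> (iv s \<cdot> s) = s" by (rule inv1)
lemma inv2s[simp]: "iv s \<cdot> (s \<cdot> iv s) = iv s" by (rule inv2)

lemma idem_aux: assumes "idem e" "idem f"
  shows "(e \<cdot> f) \<cdot> (e \<cdot> f) = e \<cdot> f \<and> e \<cdot> f = f \<cdot> (e \<cdot> f) \<cdot> e"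
proof -
  have ee: "e \<cdot> e = e" and ff: "f \<cdot> f = f" using assms idem_def by auto
  have ee': "e \<cdot> (e \<cdot> y) = e \<cdot> y" and ff': "f \<cdot> (f \<cdot> y) = f \<cdot> y" for y
    using ee ff by (metis assoc)+
  define x where "x = iv (e \<cdot> f)"
  have x1: "e \<cdot> f \<cdot> x \<cdot> (e \<cdot> f) = e \<cdot> f" unfolding x_def by (metis assoc inv1)
  have x2: "x \<cdot> (e \<cdot> f) \<cdot> x = x" unfolding x_def by (metis assoc inv2)
  have a: "e \<cdot> f \<cdot> (f \<cdot> x \<cdot> e) \<cdot> (e \<cdot> f) = e \<cdot> f"
    using x1 ee' ff' by simp
  have b: "f \<cdot> x \<cdot> e \<cdot> (e \<cdot> f) \<cdot> (f \<cdot> x \<cdot> e) = f \<cdot> x \<cdot> e"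
  proof -
    have "f \<cdot> x \<cdot> e \<cdot> (e \<cdot> f) \<cdot> (f \<cdot> x \<cdot> e) = f \<cdot> (x \<cdot> (e \<cdot> f) \<cdot> x) \<cdot> e"
      using ee' ff' by simp
    also have "\<dots> = f \<cdot> x \<cdot> e" using x2 by simp
    finally show ?thesis .
  qed
  have fxe: "f \<cdot> x \<cdot> e = x"
    using inv_uniq[of "e\<cdot>f" "f \<cdot> x \<cdot> e"] a b x_def by simp
  have xx: "x \<cdot> x = x"
  proof -
    have "x \<cdot> x = f \<cdot> x \<cdot> e \<cdot> (f \<cdot> x \<cdot> e)" using fxe by simp
    also have "\<dots> = f \<cdot> (x \<cdot> (e \<cdot> f) \<cdot> x) \<cdot> e" by simp
    also have "\<dots> = x" using x2 fxe by simp
    finally show ?thesis .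
  qed
  then have "iv x = x" using idem_inv idem_def by blast
  then have ef: "e \<cdot> f = x" using x_def inv_inv by metis
  show ?thesis using ef xx fxe by simp
qed

lemma idem_comm: assumes "idem e" "idem f" shows "e \<cdot> f = f \<cdot> e"
proof -
  have "e \<cdot> f = f \<cdot> (e \<cdot> f) \<cdot> e" using idem_aux[OF assms] by blast
  also have "\<dots> = (f \<cdot> e) \<cdot> (f \<cdot> e)" by simp
  also have "\<dots> = f \<cdot> e" using idem_aux[OF assms(2,1)] by blast
  finally show ?thesis .
qed

lemma idem_ss: "idem (s \<cdot> iv s)" unfolding idem_def
  by (metis assoc inv_prop)
lemma idem_is: "idem (iv s \<cdot> s)" unfolding idem_def
  by (metis assoc inv_prop)

lemma idem_mul: "idem g \<Longrightarrow> idem h \<Longrightarrow> idem (g \<cdot> h)"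
  unfolding idem_def by (metis assoc idem_comm idem_def)

lemma inv_mul: "iv (s \<cdot> t) = iv t \<cdot> iv s"
proof -
  have c: "s \<cdot> iv s \<cdot> (t \<cdot> iv t) = t \<cdot> iv t \<cdot> (s \<cdot> iv s)"
          "iv s \<cdot> s \<cdot> (t \<cdot> iv t) = t \<cdot> iv t \<cdot> (iv s \<cdot> s)"
    using idem_comm idem_ss idem_is by blast+
  have 1: "s \<cdot> t \<cdot> (iv t \<cdot> iv s) \<cdot> (s \<cdot> t) = s \<cdot> t"
  proof -
    have "s \<cdot> t \<cdot> (iv t \<cdot> iv s) \<cdot> (s \<cdot> t) = s \<cdot> ((t \<cdot> iv t) \<cdot> (iv s \<cdot> s)) \<cdot> t" by simp
    also have "\<dots> = s \<cdot> ((iv s \<cdot> s) \<cdot> (t \<cdot> iv t)) \<cdot> t" using c by simp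
    also have "\<dots> = (s \<cdot> iv s \<cdot> s) \<cdot> (t \<cdot> iv t \<cdot> t)" by simp
    finally show ?thesis using inv_prop by simp
  qed
  have 2: "iv t \<cdot> iv s \<cdot> (s \<cdot> t) \<cdot> (iv t \<cdot> iv s) = iv t \<cdot> iv s"
  proof -
    have "iv t \<cdot> iv s \<cdot> (s \<cdot> t) \<cdot> (iv t \<cdot> iv s) = iv t \<cdot> ((iv s \<cdot> s) \<cdot> (t \<cdot> iv t)) \<cdot> iv s" by simp
    also have "\<dots> = iv t \<cdot> ((t \<cdot> iv t) \<cdot> (iv s \<cdot> s)) \<cdot> iv s" using c by simp
    also have "\<dots> = (iv t \<cdot> t \<cdot> iv t) \<cdot> (iv s \<cdot> s \<cdot> iv s)" by simp
    finally show ?thesis using inv_prop by simp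
  qed
  show ?thesis
    apply (rule inv_uniq[symmetric])
    using 1 apply simp
    using 2 apply simp
    done
qed

lemma conj_idem: "idem g \<Longrightarrow> idem (iv s \<cdot> g \<cdot> s)"
proof -
  assume g: "idem g"
  have "iv s \<cdot> g \<cdot> s \<cdot> (iv s \<cdot> g \<cdot> s) = iv s \<cdot> ((g \<cdot> (s \<cdot> iv s)) \<cdot> g) \<cdot> s" by simp
  also have "\<dots> = iv s \<cdot> ((s \<cdot> iv s) \<cdot> (g \<cdot> g)) \<cdot> s"
    using idem_comm[OF g idem_ss] by (metis assoc)
  also have "\<dots> = (iv s \<cdot> s \<cdot> iv s) \<cdot> g \<cdot> s" using g idem_def by simp
  finally show ?thesis using inv_prop idem_def by simp
qed

lemma left_move: "idem g \<Longrightarrow> g \<cdot> s = s \<cdot> (iv s \<cdot> g \<cdot> s)"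
proof -
  assume g: "idem g"
  have "s \<cdot> (iv s \<cdot> g \<cdot> s) = (s \<cdot> iv s) \<cdot> g \<cdot> s" by simp
  also have "\<dots> = g \<cdot> (s \<cdot> iv s) \<cdot> s" using idem_comm[OF g idem_ss] by simp
  finally show ?thesis using inv_prop by simp
qed

lemma right_move: "idem g \<Longrightarrow> s \<cdot> g = (s \<cdot> g \<cdot> iv s) \<cdot> s"
proof -
  assume g: "idem g"
  have "(s \<cdot> g \<cdot> iv s) \<cdot> s = s \<cdot> (g \<cdot> (iv s \<cdot> s))" by simp
  also have "\<dots> = s \<cdot> ((iv s \<cdot> s) \<cdot> g)" using idem_comm[OF g idem_is] by simp
  finally show ?thesis using inv_prop by simp
qed

definition compat where "compat a b \<longleftrightarrow> idem (iv a \<cdot> b) \<and> idem (a \<cdot> iv b)"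
definition G where "G a b = a \<cdot> iv b \<cdot> b"

lemma compat_refl: "compat c c" unfolding compat_def using idem_ss idem_is by simp

lemma compat_inv: "compat a b \<Longrightarrow> compat (iv a) (iv b)"
  unfolding compat_def by simp

lemma compat_mul: assumes "compat a1 b1" "compat a2 b2"
  shows "compat (a1 \<cdot> a2) (b1 \<cdot> b2)"
proof -
  have g: "idem (iv a1 \<cdot> b1)" and h: "idem (iv a2 \<cdot> b2)"
    and p: "idem (a2 \<cdot> iv b2)" and q: "idem (a1 \<cdot> iv b1)"
    using assms compat_def by auto
  have "iv (a1 \<cdot> a2) \<cdot> (b1 \<cdot> b2) = iv a2 \<cdot> ((iv a1 \<cdot> b1) \<cdot> b2)" by (simp add: inv_mul)
  also have "\<dots> = iv a2 \<cdot> (b2 \<cdot> (iv b2 \<cdot> (iv a1 \<cdot> b1) \<cdot> b2))"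
    using left_move[OF g] by simp
  also have "\<dots> = (iv a2 \<cdot> b2) \<cdot> (iv b2 \<cdot> (iv a1 \<cdot> b1) \<cdot> b2)" by simp
  finally have 1: "idem (iv (a1 \<cdot> a2) \<cdot> (b1 \<cdot> b2))"
    using idem_mul[OF h conj_idem[OF g]] by simp
  have "(a1 \<cdot> a2) \<cdot> iv (b1 \<cdot> b2) = (a1 \<cdot> (a2 \<cdot> iv b2)) \<cdot> iv b1" by (simp add: inv_mul)
  also have "\<dots> = (a1 \<cdot> (a2 \<cdot> iv b2) \<cdot> iv a1) \<cdot> a1 \<cdot> iv b1"
    using right_move[OF p, of a1] by simp
  also have "\<dots> = (iv (iv a1) \<cdot> (a2 \<cdot> iv b2) \<cdot> iv a1) \<cdot> (a1 \<cdot> iv b1)" by simp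
  finally have 2: "idem ((a1 \<cdot> a2) \<cdot> iv (b1 \<cdot> b2))"
    using idem_mul[OF conj_idem[OF p, of "iv a1"] q] by simp
  show ?thesis using 1 2 compat_def by simp
qed

lemma G_mul: assumes "compat a1 b1" "compat a2 b2"
  shows "G (a1 \<cdot> a2) (b1 \<cdot> b2) = G a1 b1 \<cdot> G a2 b2"
proof -
  have p: "idem (a2 \<cdot> iv b2)" using assms compat_def by auto
  have k: "idem (iv b1 \<cdot> b1)" by (rule idem_is)
  have "G (a1 \<cdot> a2) (b1 \<cdot> b2) = a1 \<cdot> ((a2 \<cdot> iv b2) \<cdot> (iv b1 \<cdot> b1)) \<cdot> b2"
    unfolding G_def by (simp add: inv_mul)
  also have "\<dots> = a1 \<cdot> ((iv b1 \<cdot> b1) \<cdot> (a2 \<cdot> iv b2)) \<cdot> b2"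
    using idem_comm[OF p k] by simp
  also have "\<dots> = G a1 b1 \<cdot> G a2 b2" unfolding G_def by simp
  finally show ?thesis .
qed

lemma G_inv: assumes "compat a b" shows "G (iv a) (iv b) = iv (G a b)"
proof -
  have q: "idem (iv a \<cdot> b)" and p: "idem (a \<cdot> iv b)" using assms compat_def by auto
  have q': "iv a \<cdot> b = iv b \<cdot> a" using idem_inv[OF q] by (simp add: inv_mul)
  have p': "a \<cdot> iv b = b \<cdot> iv a" using idem_inv[OF p] by (simp add: inv_mul)
  have "G (iv a) (iv b) = (iv a \<cdot> b) \<cdot> iv b" unfolding G_def by simp
  also have "\<dots> = iv b \<cdot> (a \<cdot> iv b)" using q' by simp
  also have "\<dots> = iv b \<cdot> (b \<cdot> iv a)" using p' by simp
  also have "\<dots> = iv (G a b)" unfolding G_def by (simp add: inv_mul)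
  finally show ?thesis .
qed

lemma G_refl: "G c c = c" unfolding G_def using inv_prop by simp

lemma main: assumes "idem e" "idem f" "trm_vars t \<subseteq> {0}"
  shows "compat (trm_eval mul [e] t) (trm_eval mul [f] t) \<and>
         trm_eval mul [e \<cdot> f] t = G (trm_eval mul [e] t) (trm_eval mul [f] t)"
  using assms(3)
proof (induction t)
  case (Var i)
  then have i: "i = 0" by simp
  have "compat e f" unfolding compat_def using idem_inv assms idem_mul by simp
  moreover have "G e f = e \<cdot> f" using assms idem_inv idem_def unfolding G_def by simp
  ultimately show ?case using i by simp
next
  case (Const c)
  then show ?case using compat_refl G_refl by simp
next
  case (Mul t u)
  then show ?case using compat_mul G_mul by simp
next
  case (Inv t)
  then show ?case using compat_inv G_inv by simp
qed

end

theorem lemma3: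
  fixes mul :: "'a \<Rightarrow> 'a \<Rightarrow> 'a" and e f :: 'a
  assumes "inverse_semigroup mul"
    and "mul e e = e" and "mul f f = f"
    and "mul e f \<noteq> e" and "mul f e \<noteq> f"
  shows "\<not> equational_domain mul"
proof
  assume ed: "equational_domain mul"
  interpret invsg mul by (rule invsg.intro[OF assms(1)])
  have ie: "idem e" and iff: "idem f" using assms(2,3) idem_def by auto
  have sing: "algebraic mul 1 {[c]}" for c
    unfolding algebraic_def
    by (rule exI[of _ "{(Var 0, Const c)}"]) (auto simp: length_Suc_conv)
  have "algebraic mul 1 (\<Union>{{[e]}, {[f]}})"
  proof -
    have "finite {{[e]}, {[f]}}" "{{[e]}, {[f]}} \<noteq> {}" by auto
    moreover have "\<forall>Y\<in>{{[e]}, {[f]}}. algebraic mul 1 Y" using sing by auto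
    ultimately show ?thesis using ed unfolding equational_domain_def by blast
  qed
  then have "algebraic mul 1 {[e], [f]}" by (simp add: insert_commute)
  then obtain E :: "('a trm \<times> 'a trm) set" where
    Ev: "\<forall>(t, u) \<in> E. trm_vars t \<subseteq> {..<1} \<and> trm_vars u \<subseteq> {..<1}" and
    EY: "{[e], [f]} = {xs. length xs = 1 \<and> (\<forall>(t, u) \<in> E. trm_eval mul xs t = trm_eval mul xs u)}"
    unfolding algebraic_def by auto
  have "[mul e f] \<in> {[e], [f]}"
  proof -
    have "trm_eval mul [mul e f] t = trm_eval mul [mul e f] u" if tu: "(t, u) \<in> E" for t u
    proof -
      have vt: "trm_vars t \<subseteq> {0}" and vu: "trm_vars u \<subseteq> {0}" using Ev tu by auto
      have "[e] \<in> {[e], [f]}" "[f] \<in> {[e], [f]}" by auto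
      then have "trm_eval mul [e] t = trm_eval mul [e] u" "trm_eval mul [f] t = trm_eval mul [f] u"
        using EY tu by auto
      then show ?thesis using main[OF ie iff vt] main[OF ie iff vu] by simp
    qed
    then show ?thesis using EY by auto
  qed
  moreover have "mul e f = mul f e" using idem_comm[OF ie iff] .
  ultimately show False using assms(4,5) by auto
qed

end
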